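(* Let $q,r,\nu$ be positive integers with $q+1\le\nu\le q+r-1$ (so $r\ge2$). Let \[ \bar K(z)=\begin{pmatrix} I_q\otimes F(z)+S_q\otimes F'(z) & -(\ell_q\varphi^\top)\otimes G(z)\\ 0 & I_{\nu-q}\otimes I_r-S_{\nu-q}\otimes G(z)\end{pmatrix}\in\mathbb{C}^{\nu r\times(\nu r-q)}. \] Then $\mathcal{N}^0(z)\bar K(z)=0$ for all $z$, and the columns of $\bar K(z)$ form a basis of the kernel of $\mathcal{N}^0(z)$.
   Context: Matrix indices start at $0$. $u(z)=(1,\dots,z^{q-1})^\top$, $w(z)=(1,\dots,z^{r-1})$, $M(z)=u(z)w(z)$, $\mathcal{N}^0(z)=\big(\frac{1}{0!}M(z),\dots,\frac{1}{(\nu-1)!}M^{(\nu-1)}(z)\big)\in\mathbb{C}^{q\times\nu r}$. $F(z)\in\mathbb{C}^{r\times(r-1)}$ has entries $F_{ii}=-z$, $F_{i+1,i}=1$, zero otherwise; $F'$ is its $z$-derivative. $G(z)\in\mathbb{C}^{r\times r}$ has entries $G_{ij}=z^{j-i-1}$ for $j>i$, $0$ otherwise. $S_n$ is the $n\times n$ shift matrix with $(S_n)_{ij}=\delta_{i+1,j}$. $\ell_q$ is the last standard basis vector of $\mathbb{R}^q$ and $\varphi$ the first standard basis vector of $\mathbb{R}^{\nu-q}$. Thus $\bar K$ has $q$ diagonal blocks $F$ (with $F'$ directly above each but the first), then $\nu-q$ diagonal blocks $I_r$ with $-G$ directly above each. *)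

theory Defs
  imports "HOL-Analysis.Derivative" "Jordan_Normal_Form.Matrix_Kernel"
begin

definition kron :: "'a::times mat \<Rightarrow> 'a mat \<Rightarrow> 'a mat" where
  "kron A B = mat (dim_row A * dim_row B) (dim_col A * dim_col B)
     (\<lambda>(i,j). A $$ (i div dim_row B, j div dim_col B) * B $$ (i mod dim_row B, j mod dim_col B))"

definition shift_mat :: "nat \<Rightarrow> complex mat" where
  "shift_mat n = mat n n (\<lambda>(i,j). if j = i + 1 then 1 else 0)"

text \<open>k-th derivative of M(z) = u(z) w(z), a q x r matrix with entries z^(i+j).\<close>
definition Mder :: "nat \<Rightarrow> nat \<Rightarrow> nat \<Rightarrow> complex \<Rightarrow> complex mat" where
  "Mder q r k z = mat q r (\<lambda>(i,j). (deriv ^^ k) (\<lambda>w. w ^ (i + j)) z)"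

text \<open>N^0(z) = (M(z)/0!, ..., M^(nu-1)(z)/(nu-1)!) in C^{q x nu r}.\<close>
definition N0 :: "nat \<Rightarrow> nat \<Rightarrow> nat \<Rightarrow> complex \<Rightarrow> complex mat" where
  "N0 q r \<nu> z = mat q (\<nu> * r)
     (\<lambda>(i,c). (Mder q r (c div r) z $$ (i, c mod r)) / of_nat (fact (c div r)))"

definition Fm :: "nat \<Rightarrow> complex \<Rightarrow> complex mat" where
  "Fm r z = mat r (r - 1) (\<lambda>(i,j). if i = j then - z else if i = j + 1 then 1 else 0)"

definition Fm' :: "nat \<Rightarrow> complex \<Rightarrow> complex mat" where
  "Fm' r z = mat r (r - 1) (\<lambda>(i,j). if i = j then - 1 else 0)"

definition Gm :: "nat \<Rightarrow> complex \<Rightarrow> complex mat" where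
  "Gm r z = mat r r (\<lambda>(i,j). if j > i then z ^ (j - i - 1) else 0)"

definition ellphi :: "nat \<Rightarrow> nat \<Rightarrow> complex mat" where
  "ellphi q \<nu> = mat q (\<nu> - q) (\<lambda>(i,j). if i = q - 1 \<and> j = 0 then 1 else 0)"

definition Kbar :: "nat \<Rightarrow> nat \<Rightarrow> nat \<Rightarrow> complex \<Rightarrow> complex mat" where
  "Kbar q r \<nu> z = four_block_mat
     (kron (1\<^sub>m q) (Fm r z) + kron (shift_mat q) (Fm' r z))
     (- kron (ellphi q \<nu>) (Gm r z))
     (0\<^sub>m ((\<nu> - q) * r) (q * (r - 1)))
     (kron (1\<^sub>m (\<nu> - q)) (1\<^sub>m r) - kron (shift_mat (\<nu> - q)) (Gm r z))"

end

theory Submission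
  imports Defs "HOL-Computational_Algebra.Polynomial"
begin


lemma sum_split_add:
  fixes f :: "nat \<Rightarrow> 'a::comm_monoid_add"
  shows "(\<Sum>C<a+b. f C) = (\<Sum>C<a. f C) + (\<Sum>C<b. f (a+C))"
  by (induction b) (simp_all add: add.assoc)

lemma sum_group:
  fixes f :: "nat \<Rightarrow> 'a::comm_monoid_add"
  shows "(\<Sum>C<n*m. f C) = (\<Sum>b<n. \<Sum>j<m. f (b*m+j))"
proof (induction n)
  case 0 then show ?case by simp
next
  case (Suc n)
  have "(\<Sum>C<Suc n*m. f C) = (\<Sum>C<n*m+m. f C)" by (simp add: add.commute)
  also have "\<dots> = (\<Sum>C<n*m. f C) + (\<Sum>j<m. f (n*m+j))" by (rule sum_split_add)
  finally show ?case using Suc by simp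
qed

definition mkp :: "nat \<Rightarrow> (nat \<Rightarrow> complex) \<Rightarrow> complex poly" where
  "mkp m f = (\<Sum>j<m. monom (f j) j)"

lemma coeff_mkp: "coeff (mkp m f) n = (if n < m then f n else 0)"
  unfolding mkp_def coeff_sum by (auto simp: coeff_monom)

lemma coeff_lin_pow: "coeff ([:z,1:]^n) k = of_nat (n choose k) * (z::complex)^(n-k)"
proof (induction n arbitrary: k)
  case 0 then show ?case by (simp add: coeff_1)
next
  case (Suc n)
  show ?case
  proof (cases k)
    case 0 then show ?thesis using Suc by (simp add: coeff_pCons)
  next
    case (Suc k')
    have "coeff ([:z,1:]^Suc n) k = z * coeff ([:z,1:]^n) k + coeff ([:z,1:]^n) k'"
      using Suc by (simp add: coeff_pCons)
    also have "\<dots> = of_nat (n choose k) * z^(n-k+1) + of_nat (n choose k') * z^(n-k')"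
      using Suc.IH by (simp add: algebra_simps)
    also have "\<dots> = of_nat (Suc n choose k) * z^(Suc n - k)"
    proof (cases "k \<le> n")
      case True
      then have e: "n-k+1 = Suc n - k" "n - k' = Suc n - k" using Suc by auto
      have "Suc n choose k = (n choose k) + (n choose k')" using Suc by simp
      then show ?thesis unfolding e by (simp only: of_nat_add distrib_right)
    next
      case False
      show ?thesis
      proof (cases "k' = n")
        case True then show ?thesis using \<open>k = Suc k'\<close> by simp
      next
        case False
        then have "n < k'" "n < k" "Suc n < k" using \<open>\<not> k \<le> n\<close> \<open>k = Suc k'\<close> by auto
        then show ?thesis by (simp add: binomial_eq_0)
      qed
    qed
    finally show ?thesis .
  qed
qed

lemma deriv_pow_iter: "(deriv ^^ k) (\<lambda>w. w ^ n) = (\<lambda>w::complex. of_nat (fact k * (n choose k)) * w ^ (n - k))"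
proof (induction k)
  case 0 then show ?case by simp
next
  case (Suc k)
  have "deriv (\<lambda>w::complex. of_nat (fact k * (n choose k)) * w ^ (n - k)) = 
     (\<lambda>w. of_nat (fact k * (n choose k)) * (of_nat (n-k) * w ^ (n - k - 1)))"
    by (rule ext, rule DERIV_imp_deriv) (auto intro!: derivative_eq_intros)
  moreover have "fact k * (n choose k) * (n-k) = fact (Suc k) * (n choose Suc k)"
  proof -
    have h: "(n choose Suc k) * Suc k = (n choose k) * (n - k)"
    proof (cases n)
      case 0 then show ?thesis by simp
    next
      case (Suc m)
      then show ?thesis using Suc_times_binomial_eq[of m k] binomial_absorb_comp[of n k]
        by (simp add: mult.commute)
    qed
    have "fact k * (n choose k) * (n-k) = fact k * ((n choose Suc k) * Suc k)"
      by (simp only: h mult.assoc)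
    also have "\<dots> = fact (Suc k) * (n choose Suc k)"
      by (simp only: fact_Suc of_nat_id mult.assoc mult.commute mult.left_commute)
    finally show ?thesis .
  qed
  ultimately have D: "deriv (\<lambda>w::complex. of_nat (fact k * (n choose k)) * w ^ (n - k)) =
     (\<lambda>w. of_nat (fact k * (n choose k)) * (of_nat (n-k) * w ^ (n - k - 1)))"
    and N: "fact k * (n choose k) * (n-k) = fact (Suc k) * (n choose Suc k)" by blast+
  have "(deriv ^^ Suc k) (\<lambda>w. w^n) = deriv (\<lambda>w::complex. of_nat (fact k * (n choose k)) * w ^ (n - k))"
    using Suc.IH by simp
  also have "\<dots> = (\<lambda>w. of_nat (fact (Suc k) * (n choose Suc k)) * w ^ (n - Suc k))"
  proof (rule ext)
    fix w :: complex
    have "deriv (\<lambda>w::complex. of_nat (fact k * (n choose k)) * w ^ (n - k)) w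
       = of_nat (fact k * (n choose k)) * (of_nat (n-k) * w ^ (n - k - 1))" by (simp only: D)
    also have "\<dots> = (of_nat (fact k * (n choose k) * (n-k)) * w ^ (n - Suc k) :: complex)"
      by (simp add: mult_ac)
    also have "\<dots> = of_nat (fact (Suc k) * (n choose Suc k)) * w ^ (n - Suc k)"
      by (simp only: N)
    finally show "deriv (\<lambda>w::complex. of_nat (fact k * (n choose k)) * w ^ (n - k)) w =
      of_nat (fact (Suc k) * (n choose Suc k)) * w ^ (n - Suc k)" .
  qed
  finally show ?case .
qed

lemma Mder_coeff: "(deriv ^^ k) (\<lambda>w. w ^ n) (z::complex) / of_nat (fact k) = coeff ([:z,1:]^n) k"
  by (simp add: deriv_pow_iter coeff_lin_pow field_simps)


lemma mv_sum: "i < dim_row A \<Longrightarrow> dim_vec v = dim_col A \<Longrightarrow>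
   (A *\<^sub>v v) $ i = (\<Sum>j<dim_col A. A $$ (i,j) * v $ j)"
  by (simp add: scalar_prod_def lessThan_atLeast0)

lemma fb_sum:
  assumes "A \<in> carrier_mat nr1 nc1" "B \<in> carrier_mat nr1 nc2" "C \<in> carrier_mat nr2 nc1"
    "D \<in> carrier_mat nr2 nc2" "R < nr1 + nr2"
  shows "(\<Sum>j<nc1+nc2. four_block_mat A B C D $$ (R,j) * f j) =
    (if R < nr1 then (\<Sum>j<nc1. A $$ (R,j) * f j) + (\<Sum>j<nc2. B $$ (R,j) * f (nc1+j))
     else (\<Sum>j<nc1. C $$ (R-nr1,j) * f j) + (\<Sum>j<nc2. D $$ (R-nr1,j) * f (nc1+j)))"
  using assms by (simp add: sum_split_add)

lemma idx_bound: "a < n \<Longrightarrow> i < m \<Longrightarrow> a*m+i < n*(m::nat)"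
proof -
  assume "a < n" "i < m"
  then have "a*m+i < (a+1)*m" by simp
  also have "\<dots> \<le> n*m" using \<open>a < n\<close> by (intro mult_right_mono) auto
  finally show ?thesis .
qed

lemma kron_index:
  assumes "A \<in> carrier_mat n1 n2" "B \<in> carrier_mat m1 m2" "a < n1" "i < m1" "b < n2" "j < m2"
  shows "kron A B $$ (a*m1+i, b*m2+j) = A $$ (a,b) * B $$ (i,j)"
proof -
  have "a*m1+i < n1*m1" using assms(3,4) by (rule idx_bound)
  moreover have "b*m2+j < n2*m2" using assms(5,6) by (rule idx_bound)
  ultimately show ?thesis using assms unfolding kron_def by auto
qed

lemma kron_sum:
  fixes A B :: "complex mat"
  assumes "A \<in> carrier_mat n1 n2" "B \<in> carrier_mat m1 m2" "a < n1" "i < m1"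
  shows "(\<Sum>C<n2*m2. kron A B $$ (a*m1+i, C) * f C) =
    (\<Sum>b<n2. A $$ (a,b) * (\<Sum>j<m2. B $$ (i,j) * f (b*m2+j)))"
proof -
  have "(\<Sum>C<n2*m2. kron A B $$ (a*m1+i, C) * f C) =
     (\<Sum>b<n2. \<Sum>j<m2. kron A B $$ (a*m1+i, b*m2+j) * f (b*m2+j))" by (rule sum_group)
  also have "\<dots> = (\<Sum>b<n2. \<Sum>j<m2. A $$ (a,b) * (B $$ (i,j) * f (b*m2+j)))"
    by (intro sum.cong refl) (simp add: kron_index[OF assms])
  also have "\<dots> = (\<Sum>b<n2. A $$ (a,b) * (\<Sum>j<m2. B $$ (i,j) * f (b*m2+j)))"
    by (simp add: sum_distrib_left)
  finally show ?thesis .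
qed

lemma kron_carrier: "A \<in> carrier_mat n1 n2 \<Longrightarrow> B \<in> carrier_mat m1 m2 \<Longrightarrow>
   kron A B \<in> carrier_mat (n1*m1) (n2*m2)"
  unfolding kron_def by auto

lemma sum_if_eq: "(\<Sum>j<(n::nat). (if i = j then a else 0) * g j) = (if i < n then a * g i else (0::'a::comm_ring_1))"
  by (induction n) (auto simp: less_Suc_eq)

lemma sum_if_suc: "(\<Sum>j<(n::nat). (if i = j + 1 then a else 0) * g j) =
   (if 0 < i \<and> i - 1 < n then a * g (i-1) else (0::'a::comm_ring_1))"
  by (induction n) (auto simp: less_Suc_eq)


lemma coeff_linmult: "coeff ([:-(z::complex),1:] * p) i = (if i = 0 then 0 else coeff p (i-1)) - z * coeff p i"
  by (cases i) (simp_all add: coeff_pCons algebra_simps)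

lemma FmV: "i < r \<Longrightarrow> (\<Sum>j<r-1. Fm r z $$ (i,j) * f j) = coeff ([:-z,1:] * mkp (r-1) f) i"
proof -
  assume i: "i < r"
  have "(\<Sum>j<r-1. Fm r z $$ (i,j) * f j) =
     (\<Sum>j<r-1. (if i = j then -z else 0) * f j) + (\<Sum>j<r-1. (if i = j+1 then 1 else 0) * f j)"
    unfolding sum.distrib[symmetric] using i by (intro sum.cong) (auto simp: Fm_def)
  also have "\<dots> = coeff ([:-z,1:] * mkp (r-1) f) i"
    unfolding sum_if_eq sum_if_suc coeff_linmult coeff_mkp using i by auto
  finally show ?thesis .
qed

lemma Fm'V: "i < r \<Longrightarrow> (\<Sum>j<r-1. Fm' r z $$ (i,j) * f j) = - coeff (mkp (r-1) f) i"
proof -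
  assume i: "i < r"
  have "(\<Sum>j<r-1. Fm' r z $$ (i,j) * f j) = (\<Sum>j<r-1. (if i = j then -1 else 0) * f j)"
    using i by (intro sum.cong) (auto simp: Fm'_def)
  also have "\<dots> = - coeff (mkp (r-1) f) i"
    unfolding sum_if_eq coeff_mkp by auto
  finally show ?thesis .
qed

lemma IV: "i < r \<Longrightarrow> (\<Sum>j<r. 1\<^sub>m r $$ (i,j) * f j) = coeff (mkp r f) i"
proof -
  assume i: "i < r"
  have "(\<Sum>j<r. 1\<^sub>m r $$ (i,j) * f j) = (\<Sum>j<r. (if i = j then 1 else 0) * f j)"
    using i by (intro sum.cong) auto
  then show ?thesis unfolding sum_if_eq coeff_mkp using i by auto
qed

definition gfun :: "complex \<Rightarrow> nat \<Rightarrow> (nat \<Rightarrow> complex) \<Rightarrow> nat \<Rightarrow> complex" where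
  "gfun z r f i = (\<Sum>j\<in>{Suc i..<r}. z^(j-i-1) * f j)"

lemma gfun_step: "n < r \<Longrightarrow> gfun z r f n * z + f n = (if n = 0 then gfun z r f 0 * z + f 0 else gfun z r f (n-1))"
proof (cases n)
  case 0 then show ?thesis by simp
next
  case (Suc n')
  assume nr: "n < r"
  have "gfun z r f n' = (\<Sum>j\<in>{n..<r}. z^(j-n) * f j)" using Suc by (simp add: gfun_def)
  also have "\<dots> = f n + (\<Sum>j\<in>{Suc n..<r}. z^(j-n) * f j)"
    using nr by (simp add: sum.atLeast_Suc_lessThan)
  also have "(\<Sum>j\<in>{Suc n..<r}. z^(j-n) * f j) = gfun z r f n * z"
    unfolding gfun_def sum_distrib_right
  proof (intro sum.cong refl)
    fix j assume "j \<in> {Suc n..<r}"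
    then have "j - n = Suc (j - n - 1)" by auto
    then show "z^(j-n) * f j = z^(j-n-1) * f j * z" by (simp add: mult_ac)
  qed
  finally show ?thesis using Suc by simp
qed

lemma sd_mkp: "synthetic_div (mkp r f) z = mkp r (gfun z r f)"
proof -
  have "mkp r f + Polynomial.smult z (mkp r (gfun z r f)) = pCons ((if 0 < r then f 0 else 0) + z * gfun z r f 0) (mkp r (gfun z r f))"
  proof (rule poly_eqI)
    fix n
    show "coeff (mkp r f + Polynomial.smult z (mkp r (gfun z r f))) n =
          coeff (pCons ((if 0 < r then f 0 else 0) + z * gfun z r f 0) (mkp r (gfun z r f))) n"
    proof (cases n)
      case 0 then show ?thesis by (simp add: coeff_mkp gfun_def)
    next
      case (Suc n')
      show ?thesis
      proof (cases "n < r")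
        case True
        then show ?thesis using gfun_step[OF True, of z f] Suc by (simp add: coeff_mkp mult_ac add_ac)
      next
        case False
        then have "gfun z r f n' = 0" using Suc by (simp add: gfun_def)
        then show ?thesis using False Suc by (simp add: coeff_mkp)
      qed
    qed
  qed
  from synthetic_div_unique[OF this] show ?thesis by simp
qed

lemma GV: "i < r \<Longrightarrow> (\<Sum>j<r. Gm r z $$ (i,j) * f j) = coeff (synthetic_div (mkp r f) z) i"
proof -
  assume i: "i < r"
  have "(\<Sum>j<r. Gm r z $$ (i,j) * f j) = (\<Sum>j<r. (if i < j then z^(j-i-1) * f j else 0))"
    using i by (intro sum.cong) (auto simp: Gm_def)
  also have "\<dots> = (\<Sum>j\<in>{Suc i..<r}. z^(j-i-1) * f j)"
    by (rule sum.mono_neutral_cong_right) auto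
  finally show ?thesis unfolding sd_mkp coeff_mkp gfun_def using i by simp
qed


lemma dim_kron[simp]: "dim_row (kron A B) = dim_row A * dim_row B" "dim_col (kron A B) = dim_col A * dim_col B"
  unfolding kron_def by auto

lemma sum_if_eq2: "(\<Sum>b<(n::nat). (if b = i then a else 0) * g b) = (if i < n then a * g i else (0::'a::comm_ring_1))"
  by (induction n) (auto simp: less_Suc_eq)

definition cp :: "nat \<Rightarrow> complex vec \<Rightarrow> nat \<Rightarrow> complex poly" where
  "cp r c a = mkp (r-1) (\<lambda>j. c $ (a*(r-1)+j))"
definition dp :: "nat \<Rightarrow> nat \<Rightarrow> complex vec \<Rightarrow> nat \<Rightarrow> complex poly" where
  "dp q r c b = mkp r (\<lambda>j. c $ (q*(r-1) + (b*r+j)))"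

definition kpoly :: "nat \<Rightarrow> nat \<Rightarrow> nat \<Rightarrow> complex \<Rightarrow> complex vec \<Rightarrow> nat \<Rightarrow> complex poly" where
  "kpoly q r \<nu> z c k = (if k < q then
      [:-z,1:] * cp r c k - (if k+1 < q then cp r c (k+1) else 0)
        - (if k+1 = q then synthetic_div (dp q r c 0) z else 0)
    else dp q r c (k-q) - (if k+1 < \<nu> then synthetic_div (dp q r c (k+1-q)) z else 0))"

lemma Kbar_entry:
  assumes q: "1 \<le> q" and r: "2 \<le> r" and qv: "q < \<nu>" and c: "c \<in> carrier_vec (\<nu>*r - q)"
    and k: "k < \<nu>" and i: "i < r"
  shows "(Kbar q r \<nu> z *\<^sub>v c) $ (k*r+i) = coeff (kpoly q r \<nu> z c k) i"
proof -
  define n1 where "n1 = q*(r-1)"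
  define n2 where "n2 = (\<nu>-q)*r"
  define TL where "TL = kron (1\<^sub>m q) (Fm r z) + kron (shift_mat q) (Fm' r z)"
  define TR where "TR = - kron (ellphi q \<nu>) (Gm r z)"
  define BL where "BL = (0\<^sub>m ((\<nu> - q) * r) (q * (r - 1)) :: complex mat)"
  define BR where "BR = kron (1\<^sub>m (\<nu> - q)) (1\<^sub>m r) - kron (shift_mat (\<nu> - q)) (Gm r z)"
  have cF: "Fm r z \<in> carrier_mat r (r-1)" "Fm' r z \<in> carrier_mat r (r-1)" "Gm r z \<in> carrier_mat r r"
     "shift_mat q \<in> carrier_mat q q" "shift_mat (\<nu>-q) \<in> carrier_mat (\<nu>-q) (\<nu>-q)"
     "ellphi q \<nu> \<in> carrier_mat q (\<nu>-q)"
    by (simp_all add: Fm_def Fm'_def Gm_def shift_mat_def ellphi_def)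
  have cTL: "TL \<in> carrier_mat (q*r) n1" unfolding TL_def n1_def
    by (intro add_carrier_mat kron_carrier cF one_carrier_mat)
  have cTR: "TR \<in> carrier_mat (q*r) n2" unfolding TR_def n2_def
    by (intro uminus_carrier_mat kron_carrier cF)
  have cBL: "BL \<in> carrier_mat ((\<nu>-q)*r) n1" unfolding BL_def n1_def by simp
  have cBR: "BR \<in> carrier_mat ((\<nu>-q)*r) n2" unfolding BR_def n2_def
    by (intro minus_carrier_mat kron_carrier cF one_carrier_mat)
  have KB: "Kbar q r \<nu> z = four_block_mat TL TR BL BR"
    unfolding Kbar_def TL_def TR_def BL_def BR_def ..
  have nn: "\<nu>*r - q = n1 + n2"
  proof -
    obtain d where d: "\<nu> = q + d" using qv by (metis less_imp_add_positive)
    obtain r' where r': "r = Suc r'" using r by (cases r) auto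
    show ?thesis unfolding n1_def n2_def d r' by (simp add: algebra_simps)
  qed
  have Rlt: "k*r+i < q*r + (\<nu>-q)*r"
  proof -
    have "k*r+i < \<nu>*r" using k i by (rule idx_bound)
    also have "\<nu>*r = q*r + (\<nu>-q)*r" using qv by (simp add: add_mult_distrib[symmetric])
    finally show ?thesis .
  qed
  have dimK: "dim_row (Kbar q r \<nu> z) = q*r + (\<nu>-q)*r" "dim_col (Kbar q r \<nu> z) = n1 + n2"
    unfolding KB using cTL cTR cBL cBR by auto
  have "(Kbar q r \<nu> z *\<^sub>v c) $ (k*r+i) = (\<Sum>j<n1+n2. Kbar q r \<nu> z $$ (k*r+i,j) * c $ j)"
    using mv_sum[of "k*r+i" "Kbar q r \<nu> z" c] dimK Rlt c nn by simp
  also have "\<dots> = (if k*r+i < q*r then (\<Sum>j<n1. TL $$ (k*r+i,j) * c $ j) + (\<Sum>j<n2. TR $$ (k*r+i,j) * c $ (n1+j))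
     else (\<Sum>j<n1. BL $$ (k*r+i-q*r,j) * c $ j) + (\<Sum>j<n2. BR $$ (k*r+i-q*r,j) * c $ (n1+j)))"
    unfolding KB by (rule fb_sum[OF cTL cTR cBL cBR Rlt])
  also have "\<dots> = coeff (kpoly q r \<nu> z c k) i"
  proof (cases "k < q")
    case True
    then have lt: "k*r+i < q*r" using i by (intro idx_bound)
    have s1: "(\<Sum>j<n1. TL $$ (k*r+i,j) * c $ j) =
       (\<Sum>j<q*(r-1). kron (1\<^sub>m q) (Fm r z) $$ (k*r+i,j) * c $ j) +
       (\<Sum>j<q*(r-1). kron (shift_mat q) (Fm' r z) $$ (k*r+i,j) * c $ j)"
      unfolding sum.distrib[symmetric] n1_def TL_def
      by (intro sum.cong refl) (use lt cF in \<open>auto simp: distrib_right\<close>)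
    have s2: "(\<Sum>j<q*(r-1). kron (1\<^sub>m q) (Fm r z) $$ (k*r+i,j) * c $ j) = coeff ([:-z,1:] * cp r c k) i"
    proof -
      have "(\<Sum>j<q*(r-1). kron (1\<^sub>m q) (Fm r z) $$ (k*r+i,j) * c $ j) =
        (\<Sum>b<q. 1\<^sub>m q $$ (k,b) * (\<Sum>j<r-1. Fm r z $$ (i,j) * c $ (b*(r-1)+j)))"
        by (rule kron_sum[OF one_carrier_mat cF(1) True i])
      also have "\<dots> = (\<Sum>b<q. (if k = b then 1 else 0) * (\<Sum>j<r-1. Fm r z $$ (i,j) * c $ (b*(r-1)+j)))"
        by (intro sum.cong refl) (use True in auto)
      also have "\<dots> = coeff ([:-z,1:] * cp r c k) i"
        unfolding sum_if_eq cp_def using True FmV[OF i, of z "\<lambda>j. c $ (k*(r-1)+j)"] by simp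
      finally show ?thesis .
    qed
    have s3: "(\<Sum>j<q*(r-1). kron (shift_mat q) (Fm' r z) $$ (k*r+i,j) * c $ j) =
        - coeff (if k+1 < q then cp r c (k+1) else 0) i"
    proof -
      have "(\<Sum>j<q*(r-1). kron (shift_mat q) (Fm' r z) $$ (k*r+i,j) * c $ j) =
        (\<Sum>b<q. shift_mat q $$ (k,b) * (\<Sum>j<r-1. Fm' r z $$ (i,j) * c $ (b*(r-1)+j)))"
        by (rule kron_sum[OF cF(4) cF(2) True i])
      also have "\<dots> = (\<Sum>b<q. (if b = k+1 then 1 else 0) * (\<Sum>j<r-1. Fm' r z $$ (i,j) * c $ (b*(r-1)+j)))"
        by (intro sum.cong refl) (use True in \<open>auto simp: shift_mat_def\<close>)
      also have "\<dots> = - coeff (if k+1 < q then cp r c (k+1) else 0) i"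
        unfolding sum_if_eq2 cp_def using Fm'V[OF i, of z "\<lambda>j. c $ ((k+1)*(r-1)+j)"] by simp
      finally show ?thesis .
    qed
    have s4: "(\<Sum>j<n2. TR $$ (k*r+i,j) * c $ (n1+j)) =
        - coeff (if k+1 = q then synthetic_div (dp q r c 0) z else 0) i"
    proof -
      have "(\<Sum>j<n2. TR $$ (k*r+i,j) * c $ (n1+j)) =
           - (\<Sum>j<(\<nu>-q)*r. kron (ellphi q \<nu>) (Gm r z) $$ (k*r+i,j) * c $ (n1+j))"
        unfolding sum_negf[symmetric] n2_def TR_def
        by (intro sum.cong refl) (use lt cF in \<open>auto\<close>)
      also have "(\<Sum>j<(\<nu>-q)*r. kron (ellphi q \<nu>) (Gm r z) $$ (k*r+i,j) * c $ (n1+j)) =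
        (\<Sum>b<\<nu>-q. ellphi q \<nu> $$ (k,b) * (\<Sum>j<r. Gm r z $$ (i,j) * c $ (n1+(b*r+j))))"
        by (rule kron_sum[OF cF(6) cF(3) True i])
      also have "\<dots> = (\<Sum>b<\<nu>-q. (if b = 0 then (if k = q-1 then 1 else 0) else 0) * (\<Sum>j<r. Gm r z $$ (i,j) * c $ (n1+(b*r+j))))"
        by (intro sum.cong refl) (use True in \<open>auto simp: ellphi_def\<close>)
      also have "\<dots> = coeff (if k+1 = q then synthetic_div (dp q r c 0) z else 0) i"
        unfolding sum_if_eq2 dp_def using qv True GV[OF i, of z "\<lambda>j. c $ (n1+(0*r+j))"]
        by (auto simp: n1_def)
      finally show ?thesis .
    qed
    show ?thesis using lt True unfolding s1 s2 s3 s4 kpoly_def by simp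
  next
    case False
    define k' where "k' = k - q"
    have kk: "k = q + k'" "k' < \<nu> - q" using False k unfolding k'_def by auto
    have ge: "\<not> k*r+i < q*r" using False mult_le_mono1[of q k r] by linarith
    have idx: "k*r+i-q*r = k'*r+i" unfolding kk by (simp add: add_mult_distrib)
    have s0: "(\<Sum>j<n1. BL $$ (k*r+i-q*r,j) * c $ j) = 0"
      unfolding idx BL_def n1_def using idx_bound[OF kk(2) i] by (intro sum.neutral) auto
    have lt2: "k'*r+i < (\<nu>-q)*r" using kk i by (intro idx_bound)
    have s1: "(\<Sum>j<n2. BR $$ (k'*r+i,j) * c $ (n1+j)) =
       (\<Sum>j<(\<nu>-q)*r. kron (1\<^sub>m (\<nu> - q)) (1\<^sub>m r) $$ (k'*r+i,j) * c $ (n1+j)) -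
       (\<Sum>j<(\<nu>-q)*r. kron (shift_mat (\<nu> - q)) (Gm r z) $$ (k'*r+i,j) * c $ (n1+j))"
      unfolding sum_subtractf[symmetric] n2_def BR_def
      by (intro sum.cong refl) (use lt2 cF in \<open>auto simp: left_diff_distrib\<close>)
    have s2: "(\<Sum>j<(\<nu>-q)*r. kron (1\<^sub>m (\<nu> - q)) (1\<^sub>m r) $$ (k'*r+i,j) * c $ (n1+j)) = coeff (dp q r c k') i"
    proof -
      have "(\<Sum>j<(\<nu>-q)*r. kron (1\<^sub>m (\<nu> - q)) (1\<^sub>m r) $$ (k'*r+i,j) * c $ (n1+j)) =
        (\<Sum>b<\<nu>-q. 1\<^sub>m (\<nu>-q) $$ (k',b) * (\<Sum>j<r. 1\<^sub>m r $$ (i,j) * c $ (n1+(b*r+j))))"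
        by (rule kron_sum[OF one_carrier_mat one_carrier_mat kk(2) i])
      also have "\<dots> = (\<Sum>b<\<nu>-q. (if k' = b then 1 else 0) * (\<Sum>j<r. 1\<^sub>m r $$ (i,j) * c $ (n1+(b*r+j))))"
        by (intro sum.cong refl) (use kk in auto)
      also have "\<dots> = coeff (dp q r c k') i"
        unfolding sum_if_eq dp_def using kk IV[OF i, of "\<lambda>j. c $ (n1+(k'*r+j))"] by (simp add: n1_def)
      finally show ?thesis .
    qed
    have s3: "(\<Sum>j<(\<nu>-q)*r. kron (shift_mat (\<nu> - q)) (Gm r z) $$ (k'*r+i,j) * c $ (n1+j)) =
       coeff (if k+1 < \<nu> then synthetic_div (dp q r c (k+1-q)) z else 0) i"
    proof -
      have "(\<Sum>j<(\<nu>-q)*r. kron (shift_mat (\<nu> - q)) (Gm r z) $$ (k'*r+i,j) * c $ (n1+j)) =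
        (\<Sum>b<\<nu>-q. shift_mat (\<nu>-q) $$ (k',b) * (\<Sum>j<r. Gm r z $$ (i,j) * c $ (n1+(b*r+j))))"
        by (rule kron_sum[OF cF(5) cF(3) kk(2) i])
      also have "\<dots> = (\<Sum>b<\<nu>-q. (if b = k'+1 then 1 else 0) * (\<Sum>j<r. Gm r z $$ (i,j) * c $ (n1+(b*r+j))))"
        by (intro sum.cong refl) (use kk in \<open>auto simp: shift_mat_def\<close>)
      also have "\<dots> = coeff (if k+1 < \<nu> then synthetic_div (dp q r c (k+1-q)) z else 0) i"
        unfolding sum_if_eq2 dp_def using kk GV[OF i, of z "\<lambda>j. c $ (n1+((k'+1)*r+j))"]
        by (auto simp: n1_def)
      finally show ?thesis .
    qed
    have "(\<Sum>j<n1. BL $$ (k*r+i-q*r,j) * c $ j) + (\<Sum>j<n2. BR $$ (k*r+i-q*r,j) * c $ (n1+j))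
        = coeff (dp q r c k') i - coeff (if k+1 < \<nu> then synthetic_div (dp q r c (k+1-q)) z else 0) i"
      unfolding idx by (simp only: s0[unfolded idx] s1 s2 s3) simp
    then show ?thesis using ge False unfolding kpoly_def k'_def by simp
  qed
  finally show ?thesis .
qed



definition bp :: "nat \<Rightarrow> complex vec \<Rightarrow> nat \<Rightarrow> complex poly" where
  "bp r x k = mkp r (\<lambda>j. x $ (k*r+j))"

lemma kpoly_coeff_high:
  assumes "1 \<le> r" "r \<le> n"
  shows "coeff (kpoly q r \<nu> z c k) n = 0"
proof -
  have h1: "coeff ([:-z,1:] * cp r c a) n = 0" for a
    unfolding cp_def coeff_linmult coeff_mkp using assms by auto
  have h2: "coeff (cp r c a) n = 0" for a unfolding cp_def coeff_mkp using assms by auto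
  have h3: "coeff (synthetic_div (dp q r c b) z) n = 0" for b
    unfolding dp_def sd_mkp coeff_mkp using assms by auto
  have h4: "coeff (dp q r c b) n = 0" for b unfolding dp_def coeff_mkp using assms by auto
  show ?thesis unfolding kpoly_def by (auto simp: coeff_diff h1 h2 h3 h4 simp del: mult_pCons_left)
qed

lemma Kbar_bp:
  assumes q: "1 \<le> q" and r: "2 \<le> r" and qv: "q < \<nu>" and c: "c \<in> carrier_vec (\<nu>*r - q)"
    and k: "k < \<nu>"
  shows "bp r (Kbar q r \<nu> z *\<^sub>v c) k = kpoly q r \<nu> z c k"
proof (rule poly_eqI)
  fix n
  show "coeff (bp r (Kbar q r \<nu> z *\<^sub>v c) k) n = coeff (kpoly q r \<nu> z c k) n"
  proof (cases "n < r")
    case True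
    then show ?thesis unfolding bp_def coeff_mkp using Kbar_entry[OF q r qv c k True] by simp
  next
    case False
    then show ?thesis unfolding bp_def coeff_mkp using kpoly_coeff_high[of r n] r by simp
  qed
qed

definition Sh :: "complex \<Rightarrow> complex poly \<Rightarrow> complex poly" where
  "Sh z p = pcompose p [:z,1:]"
definition USh :: "complex \<Rightarrow> complex poly \<Rightarrow> complex poly" where
  "USh z p = pcompose p [:-z,1:]"

lemma Sh_USh[simp]: "Sh z (USh z p) = p"
proof -
  have "pcompose [:-z,1:] [:z,1:] = [:0,1:]" by (simp add: pcompose_pCons)
  then show ?thesis unfolding Sh_def USh_def by (simp flip: pcompose_assoc)
qed

lemma USh_Sh[simp]: "USh z (Sh z p) = p"
proof -
  have "pcompose [:z,1:] [:-z,1:] = [:0,1:]" by (simp add: pcompose_pCons)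
  then show ?thesis unfolding Sh_def USh_def by (simp flip: pcompose_assoc)
qed

lemma Sh_diff: "Sh z (p - q) = Sh z p - Sh z q" unfolding Sh_def by (rule pcompose_diff)
lemma Sh_0[simp]: "Sh z 0 = 0" unfolding Sh_def by simp
lemma Sh_lin: "Sh z ([:-z,1:] * p) = [:0,1:] * Sh z p"
  unfolding Sh_def pcompose_mult by (simp add: pcompose_pCons)

lemma Sh_sd: "Sh z (synthetic_div p z) = poly_shift 1 (Sh z p)"
proof -
  have e: "Sh z p = [:0,1:] * Sh z (synthetic_div p z) + [:poly p z:]"
  proof -
    have "Sh z p = Sh z ([:-z, 1:] * synthetic_div p z + [:poly p z:])"
      using synthetic_div_correct'[of z p] by simp
    also have "\<dots> = [:0,1:] * Sh z (synthetic_div p z) + [:poly p z:]"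
      unfolding Sh_def pcompose_add pcompose_mult by (simp add: pcompose_pCons)
    finally show ?thesis .
  qed
  show ?thesis by (rule poly_eqI) (simp add: e coeff_poly_shift coeff_pCons)
qed

lemma pcompose_pow: "pcompose (p ^ n) q = (pcompose p q) ^ n"
  by (induction n) (simp_all add: pcompose_mult pcompose_1)

lemma Sh_mkp: "Sh z (mkp m f) = (\<Sum>j<m. Polynomial.smult (f j) ([:z,1:]^j))"
proof -
  have "pcompose [:0,1:] [:z,1:] = [:z,1:]" by (simp add: pcompose_pCons)
  then show ?thesis unfolding Sh_def mkp_def pcompose_sum
    by (simp add: monom_altdef pcompose_smult pcompose_pow)
qed

lemma N0_entry:
  assumes r: "1 \<le> r" and x: "x \<in> carrier_vec (\<nu>*r)" and i: "i < q"
  shows "(N0 q r \<nu> z *\<^sub>v x) $ i = (\<Sum>k<\<nu>. coeff ([:z,1:]^i * Sh z (bp r x k)) k)"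
proof -
  have dN: "dim_row (N0 q r \<nu> z) = q" "dim_col (N0 q r \<nu> z) = \<nu>*r" by (simp_all add: N0_def)
  have "(N0 q r \<nu> z *\<^sub>v x) $ i = (\<Sum>C<\<nu>*r. N0 q r \<nu> z $$ (i,C) * x $ C)"
    using mv_sum[of i "N0 q r \<nu> z" x] dN x i by simp
  also have "\<dots> = (\<Sum>k<\<nu>. \<Sum>j<r. N0 q r \<nu> z $$ (i,k*r+j) * x $ (k*r+j))" by (rule sum_group)
  also have "\<dots> = (\<Sum>k<\<nu>. \<Sum>j<r. coeff ([:z,1:]^(i+j)) k * x $ (k*r+j))"
  proof (intro sum.cong refl)
    fix k j assume k: "k \<in> {..<\<nu>}" and j: "j \<in> {..<r}"
    have lt: "k*r+j < \<nu>*r" using k j by (intro idx_bound) auto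
    have dm: "(k*r+j) div r = k" "(k*r+j) mod r = j" using j by auto
    show "N0 q r \<nu> z $$ (i,k*r+j) * x $ (k*r+j) = coeff ([:z,1:]^(i+j)) k * x $ (k*r+j)"
    proof -
      have M: "(deriv ^^ k) (\<lambda>w. w ^ (i + j)) z = coeff ([:z,1:]^(i+j)) k * fact k"
        using Mder_coeff[of k "i+j" z] by (simp add: divide_eq_eq)
      show ?thesis using lt i j unfolding N0_def Mder_def by (simp add: dm M)
    qed
  qed
  also have "\<dots> = (\<Sum>k<\<nu>. coeff ([:z,1:]^i * Sh z (bp r x k)) k)"
  proof (intro sum.cong refl)
    fix k
    have "[:z,1:]^i * Sh z (bp r x k) = (\<Sum>j<r. Polynomial.smult (x $ (k*r+j)) ([:z,1:]^(i+j)))"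
      unfolding bp_def Sh_mkp sum_distrib_left by (simp add: power_add mult_smult_right)
    then show "(\<Sum>j<r. coeff ([:z,1:]^(i+j)) k * x $ (k*r+j)) = coeff ([:z,1:]^i * Sh z (bp r x k)) k"
      by (simp add: coeff_sum mult.commute)
  qed
  finally show ?thesis .
qed

definition Psi :: "nat \<Rightarrow> (nat \<Rightarrow> complex poly) \<Rightarrow> nat \<Rightarrow> complex" where
  "Psi \<nu> X m = (\<Sum>k<\<nu>. if m \<le> k then coeff (X k) (k-m) else 0)"

lemma Phi_Psi:
  "(\<Sum>k<\<nu>. coeff ([:z,1:]^i * X k) k) = (\<Sum>m\<le>i. coeff ([:z,1:]^i) m * Psi \<nu> X m)"
proof -
  have "(\<Sum>k<\<nu>. coeff ([:z,1:]^i * X k) k) =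
     (\<Sum>k<\<nu>. \<Sum>m\<le>i. if m \<le> k then coeff ([:z,1:]^i) m * coeff (X k) (k-m) else 0)"
  proof (intro sum.cong refl)
    fix k
    have "coeff ([:z,1:]^i * X k) k = (\<Sum>m\<le>k. coeff ([:z,1:]^i) m * coeff (X k) (k-m))"
      by (rule coeff_mult)
    also have "\<dots> = (\<Sum>m\<in>{..min k i}. coeff ([:z,1:]^i) m * coeff (X k) (k-m))"
      by (rule sum.mono_neutral_right) (auto simp: coeff_eq_0 degree_linear_power)
    also have "\<dots> = (\<Sum>m\<le>i. if m \<le> k then coeff ([:z,1:]^i) m * coeff (X k) (k-m) else 0)"
      by (rule sum.mono_neutral_cong_left) auto
    finally show "coeff ([:z,1:]^i * X k) k =
      (\<Sum>m\<le>i. if m \<le> k then coeff ([:z,1:]^i) m * coeff (X k) (k-m) else 0)" .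
  qed
  also have "\<dots> = (\<Sum>m\<le>i. \<Sum>k<\<nu>. if m \<le> k then coeff ([:z,1:]^i) m * coeff (X k) (k-m) else 0)"
    by (rule sum.swap)
  also have "\<dots> = (\<Sum>m\<le>i. coeff ([:z,1:]^i) m * Psi \<nu> X m)"
    unfolding Psi_def sum_distrib_left by (intro sum.cong refl) auto
  finally show ?thesis .
qed

lemma Psi_zero_imp_Phi_zero:
  assumes "\<And>m. m < q \<Longrightarrow> Psi \<nu> X m = 0" "i < q"
  shows "(\<Sum>k<\<nu>. coeff ([:z,1:]^i * X k) k) = 0"
  unfolding Phi_Psi using assms by (intro sum.neutral) auto

lemma Phi_zero_imp_Psi_zero:
  assumes "\<And>i. i < q \<Longrightarrow> (\<Sum>k<\<nu>. coeff ([:z,1:]^i * X k) k) = 0"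
  shows "m < q \<Longrightarrow> Psi \<nu> X m = 0"
proof (induction m rule: less_induct)
  case (less m)
  have "0 = (\<Sum>m'\<le>m. coeff ([:z,1:]^m) m' * Psi \<nu> X m')"
    using assms[OF less.prems] unfolding Phi_Psi by simp
  also have "\<dots> = coeff ([:z,1:]^m) m * Psi \<nu> X m + (\<Sum>m'<m. coeff ([:z,1:]^m) m' * Psi \<nu> X m')"
    by (simp add: lessThan_Suc_atMost[symmetric])
  also have "(\<Sum>m'<m. coeff ([:z,1:]^m) m' * Psi \<nu> X m') = 0"
    using less by (intro sum.neutral) auto
  finally show ?case by (simp add: coeff_linear_power)
qed

lemma telescope:
  fixes A B :: "nat \<Rightarrow> complex poly"
  assumes AB: "\<And>k. m < k \<Longrightarrow> k < n \<Longrightarrow> coeff (A k) (k-m) = coeff (B k) (k-m-1)"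
    and A0: "m < n \<Longrightarrow> coeff (A m) 0 = 0"
  shows "Psi n (\<lambda>k. A k - (if k+1 < n then B (k+1) else 0)) m = 0"
proof (cases n)
  case 0 then show ?thesis by (simp add: Psi_def)
next
  case (Suc N)
  define b where "b k = coeff (B k) (k-m-1)" for k
  have st1: "Psi n (\<lambda>k. A k - (if k+1 < n then B (k+1) else 0)) m =
     (\<Sum>k<Suc N. (if m \<le> k then coeff (A k) (k-m) else 0) -
     (if m \<le> k \<and> k < N then b (Suc k) else 0))"
    unfolding Psi_def Suc
  proof (intro sum.cong refl)
    fix k
    show "(if m \<le> k then coeff (A k - (if k + 1 < Suc N then B (k + 1) else 0)) (k - m) else 0) =
      (if m \<le> k then coeff (A k) (k - m) else 0) - (if m \<le> k \<and> k < N then b (Suc k) else 0)"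
      unfolding b_def by (cases "m \<le> k"; cases "k < N") (simp_all add: coeff_diff)
  qed
  have st2: "(\<Sum>k<Suc N. if m \<le> k \<and> k < N then b (Suc k) else 0) = (\<Sum>k<N. if m \<le> k then b (Suc k) else 0)"
  proof -
    have "(\<Sum>k<N. if m \<le> k \<and> k < N then b (Suc k) else 0) = (\<Sum>k<N. if m \<le> k then b (Suc k) else 0)"
      by (intro sum.cong) auto
    then show ?thesis by (simp only: sum.lessThan_Suc) simp
  qed
  have st3: "(\<Sum>k<Suc N. if m \<le> k then coeff (A k) (k-m) else 0) = (\<Sum>k<Suc N. if m < k then b k else 0)"
  proof (intro sum.cong refl)
    fix k assume k: "k \<in> {..<Suc N}"
    show "(if m \<le> k then coeff (A k) (k-m) else 0) = (if m < k then b k else 0)"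
    proof (cases "m < k")
      case True then show ?thesis using AB[of k] k Suc unfolding b_def by simp
    next
      case False
      then show ?thesis using A0 k Suc by (cases "m = k") auto
    qed
  qed
  have st4: "(\<Sum>k<Suc N. if m < k then b k else 0) = (\<Sum>k<N. if m \<le> k then b (Suc k) else 0)"
    unfolding sum.lessThan_Suc_shift by (simp add: less_Suc_eq_le)
  show ?thesis unfolding st1 sum_subtractf st2 st3 st4 by simp
qed



definition AA :: "nat \<Rightarrow> nat \<Rightarrow> complex \<Rightarrow> complex vec \<Rightarrow> nat \<Rightarrow> complex poly" where
  "AA q r z c k = (if k < q then [:0,1:] * Sh z (cp r c k) else Sh z (dp q r c (k-q)))"
definition BB :: "nat \<Rightarrow> nat \<Rightarrow> complex \<Rightarrow> complex vec \<Rightarrow> nat \<Rightarrow> complex poly" where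
  "BB q r z c k = (if k < q then Sh z (cp r c k) else poly_shift 1 (Sh z (dp q r c (k-q))))"

lemma Sh_kpoly:
  assumes "q < \<nu>" "k < \<nu>"
  shows "Sh z (kpoly q r \<nu> z c k) = AA q r z c k - (if k+1 < \<nu> then BB q r z c (k+1) else 0)"
proof (cases "k < q")
  case True
  then show ?thesis using assms
    by (cases "k+1 < q") (auto simp: kpoly_def AA_def BB_def Sh_diff Sh_lin Sh_sd simp del: mult_pCons_left)
next
  case False
  then have "k + 1 - q = k - q + 1" by simp
  then show ?thesis using assms False
    by (auto simp: kpoly_def AA_def BB_def Sh_diff Sh_sd simp del: mult_pCons_left)
qed

lemma coeff_X_mult: "coeff ([:0,1:] * (p::complex poly)) n = (if n = 0 then 0 else coeff p (n - 1))"
  by (cases n) (simp_all add: coeff_pCons)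

lemma Psi_Kbar:
  assumes "q < \<nu>" "m < q"
  shows "Psi \<nu> (\<lambda>k. Sh z (kpoly q r \<nu> z c k)) m = 0"
proof -
  have "Psi \<nu> (\<lambda>k. Sh z (kpoly q r \<nu> z c k)) m =
        Psi \<nu> (\<lambda>k. AA q r z c k - (if k+1 < \<nu> then BB q r z c (k+1) else 0)) m"
    unfolding Psi_def using assms(1) by (intro sum.cong refl) (simp add: Sh_kpoly)
  also have "\<dots> = 0"
  proof (rule telescope)
    fix k assume k: "m < k" "k < \<nu>"
    show "coeff (AA q r z c k) (k-m) = coeff (BB q r z c k) (k-m-1)"
    proof -
      have e: "Suc (k - Suc m) = k - m" "k - m \<noteq> 0" using k by auto
      show ?thesis using k by (auto simp: AA_def BB_def coeff_X_mult coeff_poly_shift e simp del: mult_pCons_left)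
    qed
  next
    show "coeff (AA q r z c m) 0 = 0" using assms by (simp add: AA_def coeff_X_mult del: mult_pCons_left)
  qed
  finally show ?thesis .
qed

lemma dim_Kbar:
  assumes "q \<le> \<nu>" "1 \<le> r"
  shows "dim_row (Kbar q r \<nu> z) = \<nu>*r" "dim_col (Kbar q r \<nu> z) = \<nu>*r - q"
proof -
  obtain d where d: "\<nu> = q + d" using assms by (metis le_add_diff_inverse)
  obtain r' where r': "r = Suc r'" using assms by (cases r) auto
  show "dim_row (Kbar q r \<nu> z) = \<nu>*r" unfolding Kbar_def d r'
    by (simp add: Fm_def Fm'_def Gm_def shift_mat_def ellphi_def algebra_simps)
  show "dim_col (Kbar q r \<nu> z) = \<nu>*r - q" unfolding Kbar_def d r'
    by (simp add: Fm_def Fm'_def Gm_def shift_mat_def ellphi_def algebra_simps)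
qed

lemma dimK_row: "q < \<nu> \<Longrightarrow> 2 \<le> r \<Longrightarrow> dim_row (Kbar q r \<nu> z) = \<nu>*r"
  by (rule dim_Kbar(1)) linarith+
lemma dimK_col: "q < \<nu> \<Longrightarrow> 2 \<le> r \<Longrightarrow> dim_col (Kbar q r \<nu> z) = \<nu>*r - q"
  by (rule dim_Kbar(2)) linarith+

lemma N0_Kbar_vec:
  assumes q: "1 \<le> q" and r: "2 \<le> r" and qv: "q < \<nu>" and c: "c \<in> carrier_vec (\<nu>*r - q)"
  shows "N0 q r \<nu> z *\<^sub>v (Kbar q r \<nu> z *\<^sub>v c) = 0\<^sub>v q"
proof (rule eq_vecI)
  have dimN: "dim_row (N0 q r \<nu> z) = q" by (simp add: N0_def)
  then show "dim_vec (N0 q r \<nu> z *\<^sub>v (Kbar q r \<nu> z *\<^sub>v c)) = dim_vec (0\<^sub>v q)" by simp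
  fix i assume "i < dim_vec (0\<^sub>v q)"
  then have i: "i < q" by simp
  have x: "Kbar q r \<nu> z *\<^sub>v c \<in> carrier_vec (\<nu>*r)"
    by (rule carrier_vecI) (simp only: dim_mult_mat_vec dimK_row[OF qv r])
  have "(N0 q r \<nu> z *\<^sub>v (Kbar q r \<nu> z *\<^sub>v c)) $ i =
     (\<Sum>k<\<nu>. coeff ([:z,1:]^i * Sh z (bp r (Kbar q r \<nu> z *\<^sub>v c) k)) k)"
    using N0_entry[OF _ x i] r by simp
  also have "\<dots> = (\<Sum>k<\<nu>. coeff ([:z,1:]^i * Sh z (kpoly q r \<nu> z c k)) k)"
    using Kbar_bp[OF q r qv c] by (intro sum.cong refl) simp
  also have "\<dots> = 0"
    by (rule Psi_zero_imp_Phi_zero[OF _ i]) (rule Psi_Kbar[OF qv])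
  finally show "(N0 q r \<nu> z *\<^sub>v (Kbar q r \<nu> z *\<^sub>v c)) $ i = 0\<^sub>v q $ i" using i by simp
qed

lemma col_as_mult: "j < dim_col (A::complex mat) \<Longrightarrow> col A j = A *\<^sub>v unit_vec (dim_col A) j"
  by (rule eq_vecI) (auto simp: row_def)

lemma part1:
  assumes q: "1 \<le> q" and r: "2 \<le> r" and qv: "q < \<nu>"
  shows "N0 q r \<nu> z * Kbar q r \<nu> z = 0\<^sub>m q (\<nu> * r - q)"
proof (rule eq_matI)
  have dK: "dim_row (Kbar q r \<nu> z) = \<nu>*r" "dim_col (Kbar q r \<nu> z) = \<nu>*r - q"
    using dimK_row[OF qv r] dimK_col[OF qv r] by auto
  have dN: "dim_row (N0 q r \<nu> z) = q" "dim_col (N0 q r \<nu> z) = \<nu>*r" by (simp_all add: N0_def)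
  show "dim_row (N0 q r \<nu> z * Kbar q r \<nu> z) = dim_row (0\<^sub>m q (\<nu> * r - q))" using dN by simp
  show "dim_col (N0 q r \<nu> z * Kbar q r \<nu> z) = dim_col (0\<^sub>m q (\<nu> * r - q))" using dK by simp
  fix i j assume ij: "i < dim_row (0\<^sub>m q (\<nu> * r - q))" "j < dim_col (0\<^sub>m q (\<nu> * r - q))"
  then have i: "i < q" and j: "j < \<nu>*r - q" by auto
  have "(N0 q r \<nu> z * Kbar q r \<nu> z) $$ (i,j) = row (N0 q r \<nu> z) i \<bullet> col (Kbar q r \<nu> z) j"
    using i j dN dK by simp
  also have "\<dots> = (N0 q r \<nu> z *\<^sub>v (Kbar q r \<nu> z *\<^sub>v unit_vec (\<nu>*r - q) j)) $ i"
    using col_as_mult[of j "Kbar q r \<nu> z"] i j dN dK by simp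
  also have "\<dots> = 0"
    using N0_Kbar_vec[OF q r qv, of "unit_vec (\<nu>*r - q) j" z] i by simp
  finally show "(N0 q r \<nu> z * Kbar q r \<nu> z) $$ (i,j) = 0\<^sub>m q (\<nu> * r - q) $$ (i,j)" using i j by simp
qed



lemma deg_hi_pcompose:
  assumes "\<And>n. d \<le> n \<Longrightarrow> coeff p n = 0" "d \<le> n"
  shows "coeff (pcompose (p::complex poly) [:a,1:]) n = 0"
proof (cases "p = 0")
  case True then show ?thesis by simp
next
  case False
  have "degree p < d"
  proof (rule ccontr)
    assume "\<not> degree p < d"
    then have "coeff p (degree p) = 0" using assms(1) by simp
    then show False using False by simp
  qed
  then have "degree (pcompose p [:a,1:]) < n" using assms(2) by (simp add: degree_pcompose)
  then show ?thesis by (simp add: coeff_eq_0)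
qed

lemma hi_Sh: "(\<And>n. d \<le> n \<Longrightarrow> coeff p n = 0) \<Longrightarrow> d \<le> n \<Longrightarrow> coeff (Sh z p) n = 0"
  unfolding Sh_def by (rule deg_hi_pcompose)
lemma hi_USh: "(\<And>n. d \<le> n \<Longrightarrow> coeff p n = 0) \<Longrightarrow> d \<le> n \<Longrightarrow> coeff (USh z p) n = 0"
  unfolding USh_def by (rule deg_hi_pcompose)

lemma down_induct:
  assumes "b < (N::nat)" "\<And>b. b < N \<Longrightarrow> (b+1 < N \<Longrightarrow> P (b+1)) \<Longrightarrow> P b"
  shows "P b"
  using assms(1)
proof (induction "N - b" arbitrary: b rule: less_induct)
  case less
  show ?case by (rule assms(2)[OF less.prems]) (rule less.hyps, auto)
qed

definition Yp :: "nat \<Rightarrow> (nat \<Rightarrow> complex poly) \<Rightarrow> nat \<Rightarrow> complex poly" where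
  "Yp \<nu> X a = (\<Sum>k\<in>{a..<\<nu>}. poly_shift (k-a) (X k))"

lemma coeff_Yp: "coeff (Yp \<nu> X a) j = (\<Sum>k\<in>{a..<\<nu>}. coeff (X k) (j + (k-a)))"
  unfolding Yp_def coeff_sum coeff_poly_shift ..

lemma Yp_step: "a < \<nu> \<Longrightarrow> Yp \<nu> X a = X a + poly_shift 1 (Yp \<nu> X (Suc a))"
proof (rule poly_eqI)
  fix j assume a: "a < \<nu>"
  have "coeff (Yp \<nu> X a) j = coeff (X a) j + (\<Sum>k\<in>{Suc a..<\<nu>}. coeff (X k) (j + (k-a)))"
    unfolding coeff_Yp using a by (simp add: sum.atLeast_Suc_lessThan)
  also have "(\<Sum>k\<in>{Suc a..<\<nu>}. coeff (X k) (j + (k-a))) = coeff (Yp \<nu> X (Suc a)) (j+1)"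
    unfolding coeff_Yp
  proof (intro sum.cong refl)
    fix k assume "k \<in> {Suc a..<\<nu>}"
    then have e: "j + 1 + (k - Suc a) = j + (k - a)" by auto
    show "coeff (X k) (j + (k - a)) = coeff (X k) (j + 1 + (k - Suc a))" by (simp only: e)
  qed
  finally show "coeff (Yp \<nu> X a) j = coeff (X a + poly_shift 1 (Yp \<nu> X (Suc a))) j"
    by (simp add: coeff_poly_shift)
qed

lemma Yp_nu: "Yp \<nu> X \<nu> = 0" unfolding Yp_def by simp

lemma Yp_0: "coeff (Yp \<nu> X a) 0 = Psi \<nu> X a"
proof -
  have "coeff (Yp \<nu> X a) 0 = (\<Sum>k\<in>{a..<\<nu>}. coeff (X k) (k-a))" unfolding coeff_Yp by simp
  also have "\<dots> = Psi \<nu> X a" unfolding Psi_def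
    by (rule sum.mono_neutral_cong_left) auto
  finally show ?thesis .
qed

lemma Yp_hi: "(\<And>k n. r \<le> n \<Longrightarrow> coeff (X k) n = 0) \<Longrightarrow> r \<le> n \<Longrightarrow> coeff (Yp \<nu> X a) n = 0"
  unfolding coeff_Yp by (intro sum.neutral) auto

lemma X_shift_eq: "coeff p 0 = 0 \<Longrightarrow> [:0,1:] * poly_shift 1 p = (p::complex poly)"
  by (rule poly_eqI) (auto simp: coeff_X_mult coeff_poly_shift simp del: mult_pCons_left)

lemma bp_hi: "r \<le> n \<Longrightarrow> coeff (bp r x k) n = 0"
  unfolding bp_def coeff_mkp by simp

lemma existence:
  assumes q: "1 \<le> q" and r: "2 \<le> r" and qv: "q < \<nu>"
    and x: "x \<in> carrier_vec (\<nu>*r)" and ker: "N0 q r \<nu> z *\<^sub>v x = 0\<^sub>v q"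
  shows "\<exists>c. c \<in> carrier_vec (\<nu>*r - q) \<and> Kbar q r \<nu> z *\<^sub>v c = x"
proof -
  define X where "X k = Sh z (bp r x k)" for k
  define Y where "Y = Yp \<nu> X"
  have Xhi: "r \<le> n \<Longrightarrow> coeff (X k) n = 0" for k n
    unfolding X_def by (rule hi_Sh[of r]) (auto simp: bp_hi)
  have Yhi: "r \<le> n \<Longrightarrow> coeff (Y a) n = 0" for a n
    unfolding Y_def by (rule Yp_hi[of r]) (use Xhi in auto)
  have Psi0: "m < q \<Longrightarrow> Psi \<nu> X m = 0" for m
  proof (rule Phi_zero_imp_Psi_zero)
    fix i assume i: "i < q"
    have "(\<Sum>k<\<nu>. coeff ([:z,1:]^i * X k) k) = (N0 q r \<nu> z *\<^sub>v x) $ i"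
      unfolding X_def using N0_entry[OF _ x i] r by simp
    also have "\<dots> = 0" using ker i by simp
    finally show "(\<Sum>k<\<nu>. coeff ([:z,1:]^i * X k) k) = 0" .
  qed
  have Y0: "a < q \<Longrightarrow> coeff (Y a) 0 = 0" for a unfolding Y_def Yp_0 using Psi0 by simp
  define n1 where "n1 = q*(r-1)"
  define cc where "cc = vec (\<nu>*r - q) (\<lambda>l. if l < n1 then coeff (USh z (poly_shift 1 (Y (l div (r-1))))) (l mod (r-1))
       else coeff (USh z (Y (q + (l - n1) div r))) ((l - n1) mod r))"
  have nn: "\<nu>*r - q = n1 + (\<nu>-q)*r"
  proof -
    obtain d where d: "\<nu> = q + d" using qv by (metis less_imp_add_positive)
    obtain r' where r': "r = Suc r'" using r by (cases r) auto
    show ?thesis unfolding n1_def d r' by (simp add: algebra_simps)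
  qed
  have ccc: "cc \<in> carrier_vec (\<nu>*r - q)" unfolding cc_def by simp
  have cp_cc: "cp r cc a = USh z (poly_shift 1 (Y a))" if a: "a < q" for a
  proof (rule poly_eqI)
    fix j
    show "coeff (cp r cc a) j = coeff (USh z (poly_shift 1 (Y a))) j"
    proof (cases "j < r-1")
      case True
      have l1: "a*(r-1)+j < n1" unfolding n1_def using a True by (rule idx_bound)
      have l2: "a*(r-1)+j < \<nu>*r - q" using l1 nn by simp
      have dm: "(a*(r-1)+j) div (r-1) = a" "(a*(r-1)+j) mod (r-1) = j" using True by auto
      show ?thesis unfolding cp_def coeff_mkp cc_def using True l1 l2 by (simp add: dm)
    next
      case False
      have "coeff (USh z (poly_shift 1 (Y a))) j = 0"
        by (rule hi_USh[of "r-1"]) (use False Yhi in \<open>auto simp: coeff_poly_shift\<close>)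
      then show ?thesis unfolding cp_def coeff_mkp using False by simp
    qed
  qed
  have dp_cc: "dp q r cc b = USh z (Y (q+b))" if b: "b < \<nu>-q" for b
  proof (rule poly_eqI)
    fix j
    show "coeff (dp q r cc b) j = coeff (USh z (Y (q+b))) j"
    proof (cases "j < r")
      case True
      have l1: "b*r+j < (\<nu>-q)*r" using b True by (rule idx_bound)
      have l2: "n1 + (b*r+j) < \<nu>*r - q" using l1 nn by simp
      have dm: "(b*r+j) div r = b" "(b*r+j) mod r = j" using True by auto
      have l3: "q*(r-1) + (b*r+j) = n1 + (b*r+j)" by (simp add: n1_def)
      show ?thesis unfolding dp_def coeff_mkp l3 using True l2 by (simp add: cc_def dm)
    next
      case False
      have "coeff (USh z (Y (q+b))) j = 0"
        by (rule hi_USh[of r]) (use False Yhi in auto)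
      then show ?thesis unfolding dp_def coeff_mkp using False by simp
    qed
  qed
  have kp: "kpoly q r \<nu> z cc k = bp r x k" if k: "k < \<nu>" for k
  proof -
    have AAe: "AA q r z cc k = (if k < q then [:0,1:] * poly_shift 1 (Y k) else Y k)"
      using k by (auto simp: AA_def cp_cc dp_cc simp del: mult_pCons_left)
    have BBe: "k+1 < \<nu> \<Longrightarrow> BB q r z cc (k+1) = poly_shift 1 (Y (Suc k))"
      by (auto simp: BB_def cp_cc dp_cc Suc_diff_le)
    have "Sh z (kpoly q r \<nu> z cc k) = X k"
    proof (cases "k < q")
      case True
      have "Sh z (kpoly q r \<nu> z cc k) = Y k - poly_shift 1 (Y (Suc k))"
        unfolding Sh_kpoly[OF qv k] AAe using True qv X_shift_eq[OF Y0[OF True]] BBe by simp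
      also have "\<dots> = X k" unfolding Y_def using Yp_step[OF k, of X] by simp
      finally show ?thesis .
    next
      case False
      have "Sh z (kpoly q r \<nu> z cc k) = Y k - (if k+1 < \<nu> then poly_shift 1 (Y (Suc k)) else 0)"
        unfolding Sh_kpoly[OF qv k] AAe using False BBe by simp
      also have "\<dots> = X k"
      proof (cases "k+1 < \<nu>")
        case True then show ?thesis unfolding Y_def using Yp_step[OF k, of X] by simp
      next
        case False
        then have e: "Suc k = \<nu>" using k by simp
        show ?thesis unfolding Y_def using Yp_step[OF k, of X] Yp_nu[of \<nu> X] False e by simp
      qed
      finally show ?thesis .
    qed
    then have "USh z (Sh z (kpoly q r \<nu> z cc k)) = USh z (X k)" by simp
    then show ?thesis unfolding X_def by simp
  qed
  have "Kbar q r \<nu> z *\<^sub>v cc = x"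
  proof (rule eq_vecI)
    have dK: "dim_row (Kbar q r \<nu> z) = \<nu>*r" using dimK_row[OF qv r] .
    show "dim_vec (Kbar q r \<nu> z *\<^sub>v cc) = dim_vec x" using dK x by simp
    fix l assume "l < dim_vec x"
    then have l: "l < \<nu>*r" using x by simp
    define k where "k = l div r"
    define i where "i = l mod r"
    have li: "l = k*r+i" unfolding k_def i_def by simp
    have k: "k < \<nu>" "i < r" using l r unfolding k_def i_def
      by (auto simp: div_less_iff_less_mult)
    have "(Kbar q r \<nu> z *\<^sub>v cc) $ l = coeff (kpoly q r \<nu> z cc k) i"
      unfolding li by (rule Kbar_entry[OF q r qv ccc k])
    also have "\<dots> = x $ l" unfolding kp[OF k(1)] bp_def coeff_mkp li using k by simp
    finally show "(Kbar q r \<nu> z *\<^sub>v cc) $ l = x $ l" .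
  qed
  then show ?thesis using ccc by blast
qed



lemma Kinj:
  assumes q: "1 \<le> q" and r: "2 \<le> r" and qv: "q < \<nu>" and c: "c \<in> carrier_vec (\<nu>*r - q)"
    and K0: "Kbar q r \<nu> z *\<^sub>v c = 0\<^sub>v (\<nu>*r)"
  shows "c = 0\<^sub>v (\<nu>*r - q)"
proof -
  have kp0: "kpoly q r \<nu> z c k = 0" if k: "k < \<nu>" for k
  proof -
    have "kpoly q r \<nu> z c k = bp r (0\<^sub>v (\<nu>*r)) k" using Kbar_bp[OF q r qv c k, of z] K0 by simp
    also have "\<dots> = 0"
    proof (rule poly_eqI)
      fix j
      show "coeff (bp r (0\<^sub>v (\<nu>*r)) k) j = coeff 0 j"
        unfolding bp_def coeff_mkp using idx_bound[OF k, of j r] by auto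
    qed
    finally show ?thesis .
  qed
  have rel: "AA q r z c k = (if k+1 < \<nu> then BB q r z c (k+1) else 0)" if k: "k < \<nu>" for k
    using Sh_kpoly[OF qv k, of z r c] kp0[OF k] by simp
  have D: "Sh z (dp q r c b) = 0" if "b < \<nu>-q" for b
    using that
  proof (rule down_induct)
    fix b assume b: "b < \<nu>-q" and IH: "b+1 < \<nu>-q \<Longrightarrow> Sh z (dp q r c (b+1)) = 0"
    have "AA q r z c (q+b) = (if q+b+1 < \<nu> then BB q r z c (q+b+1) else 0)" using b by (intro rel) auto
    moreover have "AA q r z c (q+b) = Sh z (dp q r c b)" by (simp add: AA_def)
    moreover have "q+b+1 < \<nu> \<Longrightarrow> BB q r z c (q+b+1) = 0"
      using IH by (simp add: BB_def)
    ultimately show "Sh z (dp q r c b) = 0" by (auto split: if_splits)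
  qed
  have C: "Sh z (cp r c a) = 0" if "a < q" for a
    using that
  proof (rule down_induct)
    fix a assume a: "a < q" and IH: "a+1 < q \<Longrightarrow> Sh z (cp r c (a+1)) = 0"
    have "AA q r z c a = (if a+1 < \<nu> then BB q r z c (a+1) else 0)" using a qv by (intro rel) auto
    moreover have "AA q r z c a = [:0,1:] * Sh z (cp r c a)" using a by (simp add: AA_def del: mult_pCons_left)
    moreover have "BB q r z c (a+1) = 0"
    proof (cases "a+1 < q")
      case True then show ?thesis using IH by (simp add: BB_def)
    next
      case False
      then have "a + 1 - q = 0" using a by simp
      then show ?thesis using False D[of 0] qv by (simp add: BB_def)
    qed
    ultimately have "[:0,1:] * Sh z (cp r c a) = 0" by (auto split: if_splits)
    then show "Sh z (cp r c a) = 0" by (simp del: mult_pCons_left)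
  qed
  define n1 where "n1 = q*(r-1)"
  have nn: "\<nu>*r - q = n1 + (\<nu>-q)*r"
  proof -
    obtain d where d: "\<nu> = q + d" using qv by (metis less_imp_add_positive)
    obtain r' where r': "r = Suc r'" using r by (cases r) auto
    show ?thesis unfolding n1_def d r' by (simp add: algebra_simps)
  qed
  show ?thesis
  proof (rule eq_vecI)
    show "dim_vec c = dim_vec (0\<^sub>v (\<nu>*r - q))" using c by simp
    fix l assume "l < dim_vec (0\<^sub>v (\<nu>*r - q))"
    then have l: "l < n1 + (\<nu>-q)*r" using nn by simp
    show "c $ l = 0\<^sub>v (\<nu>*r - q) $ l"
    proof (cases "l < n1")
      case True
      define a where "a = l div (r-1)"
      define j where "j = l mod (r-1)"
      have r1: "0 < r - 1" using r by simp
      have aj: "a < q" "j < r - 1" "l = a*(r-1)+j" using True r1 unfolding a_def j_def n1_def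
        by (auto simp: div_less_iff_less_mult mult.commute)
      have "cp r c a = 0" using C[OF aj(1)] by (metis USh_Sh Sh_0 USh_Sh)
      then have "coeff (cp r c a) j = 0" by simp
      then have "c $ l = 0" unfolding cp_def coeff_mkp using aj by simp
      then show ?thesis using l nn by simp
    next
      case False
      define b where "b = (l - n1) div r"
      define j where "j = (l - n1) mod r"
      have bj: "b < \<nu>-q" "j < r" "l = n1 + (b*r+j)" using False l r unfolding b_def j_def
        by (auto simp: div_less_iff_less_mult)
      have "dp q r c b = 0" using D[OF bj(1)] by (metis USh_Sh Sh_0)
      then have "coeff (dp q r c b) j = 0" by simp
      then have "c $ l = 0" unfolding dp_def coeff_mkp using bj by (simp add: n1_def)
      then show ?thesis using l nn by simp
    qed
  qed
qed

theorem proposition4p6: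
  fixes q r \<nu> :: nat and z :: complex
  assumes "q \<ge> 1" "r \<ge> 1" "\<nu> \<ge> 1" "q + 1 \<le> \<nu>" "\<nu> \<le> q + r - 1"
  shows "N0 q r \<nu> z * Kbar q r \<nu> z = 0\<^sub>m q (\<nu> * r - q)
    \<and> (\<forall>x \<in> mat_kernel (N0 q r \<nu> z).
          \<exists>!c. c \<in> carrier_vec (\<nu> * r - q) \<and> Kbar q r \<nu> z *\<^sub>v c = x)"
proof
  have q: "1 \<le> q" and r: "2 \<le> r" and qv: "q < \<nu>" using assms by auto
  show "N0 q r \<nu> z * Kbar q r \<nu> z = 0\<^sub>m q (\<nu> * r - q)" by (rule part1[OF q r qv])
  show "\<forall>x \<in> mat_kernel (N0 q r \<nu> z).
          \<exists>!c. c \<in> carrier_vec (\<nu> * r - q) \<and> Kbar q r \<nu> z *\<^sub>v c = x"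
  proof
    fix x assume xk: "x \<in> mat_kernel (N0 q r \<nu> z)"
    have dN: "dim_row (N0 q r \<nu> z) = q" "dim_col (N0 q r \<nu> z) = \<nu>*r" by (simp_all add: N0_def)
    have x: "x \<in> carrier_vec (\<nu>*r)" and ker: "N0 q r \<nu> z *\<^sub>v x = 0\<^sub>v q"
      using xk dN unfolding mat_kernel_def by auto
    obtain cc where cc: "cc \<in> carrier_vec (\<nu>*r - q)" "Kbar q r \<nu> z *\<^sub>v cc = x"
      using existence[OF q r qv x ker] by blast
    have KC: "Kbar q r \<nu> z \<in> carrier_mat (\<nu>*r) (\<nu>*r - q)"
      by (rule carrier_matI) (simp_all only: dimK_row[OF qv r] dimK_col[OF qv r])
    show "\<exists>!c. c \<in> carrier_vec (\<nu> * r - q) \<and> Kbar q r \<nu> z *\<^sub>v c = x"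
    proof (rule ex1I)
      show "cc \<in> carrier_vec (\<nu> * r - q) \<and> Kbar q r \<nu> z *\<^sub>v cc = x" using cc by simp
      fix y assume y: "y \<in> carrier_vec (\<nu> * r - q) \<and> Kbar q r \<nu> z *\<^sub>v y = x"
      have "Kbar q r \<nu> z *\<^sub>v (y - cc) = Kbar q r \<nu> z *\<^sub>v y - Kbar q r \<nu> z *\<^sub>v cc"
        using mult_minus_distrib_mat_vec[OF KC] y cc by simp
      also have "\<dots> = 0\<^sub>v (\<nu>*r)" using y cc x by simp
      finally have "y - cc = 0\<^sub>v (\<nu>*r - q)"
        using Kinj[OF q r qv, of "y - cc" z] y cc by simp
      then show "y = cc"
      proof -
        assume e: "y - cc = 0\<^sub>v (\<nu>*r - q)"
        show "y = cc"
        proof (rule eq_vecI)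
          show "dim_vec y = dim_vec cc" using y cc by simp
          fix i assume "i < dim_vec cc"
          then have "(y - cc) $ i = 0" using e cc by simp
          then show "y $ i = cc $ i" using \<open>i < dim_vec cc\<close> y cc by simp
        qed
      qed
    qed
  qed
qed

end
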